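(* Let $(Y,U)$ be discrete random variables with $Y$ taking values in a finite set $\mathcal{Y}$, let $\mu\in(0,\frac12)$ and $\epsilon>0$. If $$\Pr\left(|h(Y|U)-c|>\epsilon\right)<\mu$$ for some $c>0$, then $$|\mathbb{H}(Y|U)-c|<\epsilon+\mu\log_2\frac{|\mathcal{Y}|}{\mu^2}.$$
   Context: $h(Y|U)$ denotes the random variable $-\log_2 p_{Y|U}(Y|U)$; $\mathbb{H}(Y|U)$ is the conditional entropy. *)

theory Defs
  imports "HOL-Probability.Probability"
begin

text \<open>A pair of discrete random variables (Y,U) is given by its joint pmf
  p :: ('y \<times> 'u) pmf.\<close>

definition cond_prob :: "('y \<times> 'u) pmf \<Rightarrow> 'y \<Rightarrow> 'u \<Rightarrow> real" where
  "cond_prob p y u = pmf p (y, u) / pmf (map_pmf snd p) u"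

definition cond_info :: "('y \<times> 'u) pmf \<Rightarrow> 'y \<times> 'u \<Rightarrow> real" where
  "cond_info p yu = - log 2 (cond_prob p (fst yu) (snd yu))"

definition cond_entropy :: "('y \<times> 'u) pmf \<Rightarrow> real" where
  "cond_entropy p = measure_pmf.expectation p (cond_info p)"

end

theory Submission imports Defs begin

lemma ln2_ge_half: "ln (2::real) \<ge> 1/2"
proof -
  have "exp (1::real) \<le> 4" using exp_le by simp
  hence "1 \<le> ln (4::real)" using ln_le_cancel_iff[of "exp 1" 4] by simp
  moreover have "ln (4::real) = 2 * ln 2" using ln_realpow[of 2 2] by simp
  ultimately show ?thesis by simp
qed

lemma count_one:
  fixes q :: "'u pmf" and y :: 'y
  shows "(\<integral>\<^sup>+ x. indicator (range (Pair y)) x * ennreal (pmf q (snd x)) \<partial>count_space UNIV) = 1"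
proof -
  have "(\<integral>\<^sup>+ x. indicator (range (Pair y)) x * ennreal (pmf q (snd x)) \<partial>count_space UNIV)
      = (\<integral>\<^sup>+ x. ennreal (pmf q (snd x)) \<partial>count_space (range (Pair y)))"
    by (subst nn_integral_count_space_indicator) (auto simp: mult.commute)
  also have "\<dots> = (\<integral>\<^sup>+ u. ennreal (pmf q u) \<partial>count_space UNIV)"
    by (subst nn_integral_bij_count_space[symmetric, of "Pair y"]) (auto simp: bij_betw_def inj_on_def)
  also have "\<dots> = 1" by (simp add: nn_integral_pmf)
  finally show ?thesis .
qed


context
  fixes p :: "('y \<times> 'u) pmf" and Ys :: "'y set"
  assumes fin: "finite Ys" and supp: "\<forall>yu \<in> set_pmf p. fst yu \<in> Ys"
begin

definition gg :: "'y \<times> 'u \<Rightarrow> real" where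
  "gg x = (if x \<in> set_pmf p then pmf (map_pmf snd p) (snd x) / pmf p x else 0)"

lemma marg_ge: "pmf p x \<le> pmf (map_pmf snd p) (snd x)"
proof -
  have "pmf (map_pmf snd p) (snd x) = measure_pmf.prob p (snd -` {snd x})" by (simp add: pmf_map)
  moreover have "measure_pmf.prob p {x} \<le> measure_pmf.prob p (snd -` {snd x})"
    by (rule measure_pmf.finite_measure_mono) auto
  ultimately show ?thesis by (simp add: measure_pmf_single)
qed

lemma gg_nonneg: "gg x \<ge> 0"
  by (simp add: gg_def)

lemma gg_pos: "x \<in> set_pmf p \<Longrightarrow> gg x \<ge> 1"
  using marg_ge[of x] by (simp add: gg_def set_pmf_eq')

lemma nn_gg: "(\<integral>\<^sup>+ x. ennreal (gg x) \<partial>measure_pmf p) \<le> ennreal (real (card Ys))"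
proof -
  have "(\<integral>\<^sup>+ x. ennreal (gg x) \<partial>measure_pmf p) = (\<integral>\<^sup>+ x. ennreal (pmf p x) * ennreal (gg x) \<partial>count_space UNIV)"
    by (rule nn_integral_measure_pmf)
  also have "\<dots> \<le> (\<integral>\<^sup>+ x. (\<Sum>y\<in>Ys. indicator (range (Pair y)) x * ennreal (pmf (map_pmf snd p) (snd x))) \<partial>count_space UNIV)"
  proof (rule nn_integral_mono)
    fix x :: "'y \<times> 'u"
    show "ennreal (pmf p x) * ennreal (gg x) \<le> (\<Sum>y\<in>Ys. indicator (range (Pair y)) x * ennreal (pmf (map_pmf snd p) (snd x)))"
    proof (cases "x \<in> set_pmf p")
      case True
      then have "fst x \<in> Ys" using supp by auto
      have pp: "pmf p x > 0" using True by (simp add: set_pmf_eq')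
      have "ennreal (pmf p x) * ennreal (gg x) = ennreal (pmf (map_pmf snd p) (snd x))"
        using True pp by (simp add: gg_def ennreal_mult'[symmetric])
      also have "\<dots> = indicator (range (Pair (fst x))) x * ennreal (pmf (map_pmf snd p) (snd x))"
        by (cases x) auto
      also have "\<dots> \<le> (\<Sum>y\<in>Ys. indicator (range (Pair y)) x * ennreal (pmf (map_pmf snd p) (snd x)))"
        by (rule member_le_sum) (use \<open>fst x \<in> Ys\<close> fin in auto)
      finally show ?thesis .
    next
      case False
      then have "pmf p x = 0" by (simp add: set_pmf_iff)
      then show ?thesis by simp
    qed
  qed
  also have "\<dots> = (\<Sum>y\<in>Ys. (\<integral>\<^sup>+ x. indicator (range (Pair y)) x * ennreal (pmf (map_pmf snd p) (snd x)) \<partial>count_space UNIV))"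
    by (rule nn_integral_sum) auto
  also have "\<dots> = (\<Sum>y\<in>Ys. (1::ennreal))" by (rule sum.cong[OF refl]) (rule count_one)
  also have "\<dots> = ennreal (real (card Ys))" by (simp add: ennreal_of_nat_eq_real_of_nat)
  finally show ?thesis .
qed

lemma int_gg: "integrable (measure_pmf p) gg"
  apply (rule integrableI_nonneg)
  using nn_gg gg_nonneg by (auto simp: ennreal_less_top order.strict_trans1)

lemma int_gg_le: "(\<integral>x. gg x \<partial>measure_pmf p) \<le> real (card Ys)"
proof -
  have "ennreal (\<integral>x. gg x \<partial>measure_pmf p) = (\<integral>\<^sup>+ x. ennreal (gg x) \<partial>measure_pmf p)"
    by (rule nn_integral_eq_integral[symmetric]) (auto simp: int_gg gg_nonneg)
  with nn_gg show ?thesis by (metis ennreal_le_iff of_nat_0_le_iff)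
qed

lemma info_eq: "x \<in> set_pmf p \<Longrightarrow> cond_info p x = ln (gg x) / ln 2"
  using marg_ge[of x]
  apply (cases x)
  apply (simp add: cond_info_def cond_prob_def gg_def set_pmf_eq' log_def ln_div)
  by (simp add: divide_simps)

lemma info_nonneg: "x \<in> set_pmf p \<Longrightarrow> cond_info p x \<ge> 0"
  using info_eq gg_pos by simp

lemma info_bound: "x \<in> set_pmf p \<Longrightarrow> t > 0 \<Longrightarrow> cond_info p x \<le> (ln t + gg x / t - 1) / ln 2"
proof -
  assume x: "x \<in> set_pmf p" and t: "t > 0"
  have g: "gg x > 0" using gg_pos[OF x] by simp
  have "ln (gg x) = ln t + ln (gg x / t)" using g t by (simp add: ln_div)
  also have "\<dots> \<le> ln t + (gg x / t - 1)" using ln_le_minus_one[of "gg x / t"] g t by simp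
  finally show ?thesis using info_eq[OF x] by (simp add: divide_right_mono)
qed

lemma card_pos: "card Ys \<ge> 1"
proof -
  obtain x where "x \<in> set_pmf p" using set_pmf_not_empty[of p] by (meson ex_in_conv)
  then have "fst x \<in> Ys" using supp by auto
  then have "card Ys > 0" using fin card_gt_0_iff by blast
  then show ?thesis by simp
qed

lemma int_info: "integrable (measure_pmf p) (cond_info p)"
proof (rule Bochner_Integration.integrable_bound)
  show "integrable (measure_pmf p) (\<lambda>x. (ln (real (card Ys)) + gg x) / ln 2)"
    using int_gg by auto
  show "AE x in measure_pmf p. norm (cond_info p x) \<le> norm ((ln (real (card Ys)) + gg x) / ln 2)"
    unfolding AE_measure_pmf_iff
  proof
    fix x assume x: "x \<in> set_pmf p"
    have N: "real (card Ys) \<ge> 1" using card_pos by simp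
    have "cond_info p x \<le> (ln (real (card Ys)) + gg x / real (card Ys) - 1) / ln 2"
      using info_bound[OF x, of "real (card Ys)"] N by simp
    also have "\<dots> \<le> (ln (real (card Ys)) + gg x) / ln 2"
    proof -
      have "gg x \<le> gg x * real (card Ys)" using mult_left_mono[OF N gg_nonneg[of x]] by simp
      then have "gg x / real (card Ys) \<le> gg x" using N by (simp add: divide_le_eq)
      then show ?thesis by (intro divide_right_mono) auto
    qed
    finally show "norm (cond_info p x) \<le> norm ((ln (real (card Ys)) + gg x) / ln 2)"
      using info_nonneg[OF x] N gg_nonneg[of x] by simp
  qed
qed simp

lemma part_bound:
  assumes s: "measure_pmf.prob p S > 0"
  shows "(\<integral>x. cond_info p x * indicator S x \<partial>measure_pmf p)
           \<le> measure_pmf.prob p S * log 2 (real (card Ys) / measure_pmf.prob p S)"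
proof -
  define s where "s = measure_pmf.prob p S"
  define N where "N = real (card Ys)"
  have N: "N \<ge> 1" using card_pos by (simp add: N_def)
  have s0: "s > 0" using s by (simp add: s_def)
  have t: "N / s > 0" using N s0 by simp
  have "(\<integral>x. cond_info p x * indicator S x \<partial>measure_pmf p)
      \<le> (\<integral>x. indicator S x * ((ln (N/s) - 1) / ln 2) + (gg x * indicator S x) * (s / N / ln 2) \<partial>measure_pmf p)"
  proof (rule integral_mono_AE)
    have iS: "integrable (measure_pmf p) (indicat_real S)"
      by (rule integrable_real_indicator) (auto simp: less_top[symmetric] measure_pmf.emeasure_finite)
    show "integrable (measure_pmf p) (\<lambda>x. cond_info p x * indicator S x)"
      by (rule integrable_real_mult_indicator) (auto simp: int_info)
    show "integrable (measure_pmf p) (\<lambda>x. indicator S x * ((ln (N/s) - 1) / ln 2) + (gg x * indicator S x) * (s / N / ln 2))"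
      using iS
      by (intro Bochner_Integration.integrable_add integrable_mult_left integrable_real_mult_indicator
          integrable_mult_right) (auto simp: int_gg)
    show "AE x in measure_pmf p. cond_info p x * indicator S x \<le> indicator S x * ((ln (N/s) - 1) / ln 2) + (gg x * indicator S x) * (s / N / ln 2)"
      unfolding AE_measure_pmf_iff
    proof
      fix x assume x: "x \<in> set_pmf p"
      have "cond_info p x \<le> (ln (N/s) + gg x / (N/s) - 1) / ln 2" using info_bound[OF x t] .
      also have "\<dots> = (ln (N/s) - 1) / ln 2 + gg x * (s / N / ln 2)"
        using N s0 by (simp add: field_simps)
      finally show "cond_info p x * indicator S x \<le> indicator S x * ((ln (N/s) - 1) / ln 2) + (gg x * indicator S x) * (s / N / ln 2)"
        by (simp add: indicator_def)
    qed
  qed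
  also have "\<dots> = s * ((ln (N/s) - 1) / ln 2) + (\<integral>x. gg x * indicator S x \<partial>measure_pmf p) * (s / N / ln 2)"
  proof -
    have iS: "integrable (measure_pmf p) (indicat_real S)"
      by (rule integrable_real_indicator) (auto simp: less_top[symmetric] measure_pmf.emeasure_finite)
    have i1: "integrable (measure_pmf p) (\<lambda>x. indicator S x * ((ln (N/s) - 1) / ln 2))"
      using iS by (rule integrable_mult_left)
    have i2: "integrable (measure_pmf p) (\<lambda>x. (gg x * indicator S x) * (s / N / ln 2))"
      by (intro integrable_mult_left integrable_real_mult_indicator int_gg) auto
    show ?thesis
      by (subst Bochner_Integration.integral_add[OF i1 i2]) (simp add: s_def)
  qed
  also have "\<dots> \<le> s * ((ln (N/s) - 1) / ln 2) + N * (s / N / ln 2)"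
  proof -
    have "(\<integral>x. gg x * indicator S x \<partial>measure_pmf p) \<le> (\<integral>x. gg x \<partial>measure_pmf p)"
      by (intro integral_mono integrable_real_mult_indicator int_gg) (auto simp: indicator_def gg_nonneg)
    also have "\<dots> \<le> N" using int_gg_le by (simp add: N_def)
    finally show ?thesis using s0 N by (intro add_left_mono mult_right_mono) auto
  qed
  also have "\<dots> = s * log 2 (N / s)" using N s0 by (simp add: log_def field_simps)
  finally show ?thesis by (simp add: s_def N_def)
qed

end


lemma xlog_bound:
  fixes s \<mu> :: real
  assumes "0 < s" "s < \<mu>" "\<mu> < 1/2"
  shows "s * log 2 (1/s) < 2 * \<mu> * log 2 (1/\<mu>)"
proof -
  define r where "r = s / \<mu>"
  have mu: "\<mu> > 0" using assms by simp
  have r: "0 < r" "r < 1" using assms by (auto simp: r_def)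
  have sr: "s = \<mu> * r" using mu by (simp add: r_def)
  have a1: "log 2 (1/\<mu>) > 1"
  proof -
    have "1/\<mu> > 2" using assms by (simp add: field_simps)
    then have "log 2 (1/\<mu>) > log 2 2" using mu by (subst log_less_cancel_iff) auto
    then show ?thesis by simp
  qed
  have "ln (1/r) = 2 * ln (1 / sqrt r)"
    using r by (simp add: ln_div ln_sqrt)
  also have "\<dots> \<le> 2 * (1 / sqrt r - 1)" using ln_le_minus_one[of "1/sqrt r"] r by simp
  finally have "r * ln (1/r) \<le> r * (2 * (1 / sqrt r - 1))" using r by (simp add: mult_left_mono)
  also have "\<dots> = 2 * (sqrt r - r)" using r
    by (simp add: field_simps)
  also have "\<dots> \<le> 1/2"
  proof -
    have "(sqrt r - 1/2)^2 \<ge> 0" by simp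
    then show ?thesis using r by (simp add: power2_eq_square algebra_simps)
  qed
  finally have rl: "r * ln (1/r) \<le> 1/2" .
  have "r * log 2 (1/r) = r * ln (1/r) / ln 2" by (simp add: log_def)
  also have "\<dots> \<le> (1/2) / ln 2" using rl by (intro divide_right_mono) auto
  also have "\<dots> \<le> 1" using ln2_ge_half by (simp add: divide_le_eq)
  finally have rl2: "r * log 2 (1/r) \<le> 1" .
  have "log 2 (1/s) = log 2 (1/\<mu>) + log 2 (1/r)"
  proof -
    have e: "1/s = (1/\<mu>) * (1/r)" by (simp add: sr)
    show ?thesis unfolding e using mu r by (intro log_mult_pos) auto
  qed
  moreover have "s * log 2 (1/r) = \<mu> * (r * log 2 (1/r))"
    unfolding sr by (rule mult.assoc)
  ultimately have "s * log 2 (1/s) = s * log 2 (1/\<mu>) + \<mu> * (r * log 2 (1/r))"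
    by (simp only: distrib_left)
  moreover have "\<mu> * (r * log 2 (1/r)) \<le> \<mu> * 1"
    by (rule mult_left_mono[OF rl2]) (use mu in simp)
  moreover have "s * log 2 (1/\<mu>) < \<mu> * log 2 (1/\<mu>)"
    by (rule mult_strict_right_mono) (use assms a1 in auto)
  moreover have "\<mu> * 1 < \<mu> * log 2 (1/\<mu>)"
    by (rule mult_strict_left_mono[OF a1 mu])
  ultimately show ?thesis by linarith
qed

theorem lemma8:
  fixes p :: "('y \<times> 'u) pmf" and Ys :: "'y set" and \<mu> \<epsilon> c :: real
  assumes "finite Ys"
    and "\<forall>yu \<in> set_pmf p. fst yu \<in> Ys"
    and "0 < \<mu>" and "\<mu> < 1/2" and "\<epsilon> > 0" and "c > 0"
    and "measure_pmf.prob p {yu. \<bar>cond_info p yu - c\<bar> > \<epsilon>} < \<mu>"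
  shows "\<bar>cond_entropy p - c\<bar> < \<epsilon> + \<mu> * log 2 (real (card Ys) / \<mu>\<^sup>2)"
proof -
  note fin = assms(1) and supp = assms(2)
  define h where "h = cond_info p"
  define S where "S = {yu. \<bar>cond_info p yu - c\<bar> > \<epsilon>}"
  define s where "s = measure_pmf.prob p S"
  define N where "N = real (card Ys)"
  define L where "L = log 2 N"
  define a where "a = log 2 (1/\<mu>)"
  define G where "G = (\<integral>x. h x * indicator (UNIV - S) x \<partial>measure_pmf p)"
  define B where "B = (\<integral>x. h x * indicator S x \<partial>measure_pmf p)"
  have N1: "N \<ge> 1" using card_pos[OF fin supp] by (simp add: N_def)
  have L0: "L \<ge> 0" using N1 by (simp add: L_def)
  have s0: "s \<ge> 0" by (simp add: s_def)
  have smu: "s < \<mu>" using assms(7) by (simp add: s_def S_def)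
  have a1: "a > 1"
  proof -
    have "1/\<mu> > 2" using assms by (simp add: field_simps)
    then have "log 2 (1/\<mu>) > log 2 2" using assms by (subst log_less_cancel_iff) auto
    then show ?thesis by (simp add: a_def)
  qed
  have logeq: "log 2 (real (card Ys) / \<mu>\<^sup>2) = L + 2 * a"
    using N1 assms(3) by (simp add: L_def a_def N_def log_divide log_nat_power)
  have hint: "integrable (measure_pmf p) h" using int_info[OF fin supp] by (simp add: h_def)
  have H: "cond_entropy p = G + B"
  proof -
    have "cond_entropy p = (\<integral>x. h x * indicator (UNIV - S) x + h x * indicator S x \<partial>measure_pmf p)"
      unfolding cond_entropy_def h_def by (intro Bochner_Integration.integral_cong) (auto simp: indicator_def)
    also have "\<dots> = G + B" unfolding G_def B_def
      by (intro Bochner_Integration.integral_add integrable_real_mult_indicator hint) auto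
    finally show ?thesis .
  qed
  have pc: "measure_pmf.prob p (UNIV - S) = 1 - s"
    using measure_pmf.prob_compl[of S p] by (simp add: s_def)
  have iC: "\<And>k. integrable (measure_pmf p) (\<lambda>x. indicat_real (UNIV - S) x * k)"
    by (intro integrable_mult_left integrable_real_indicator) (auto simp: less_top[symmetric] measure_pmf.emeasure_finite)
  have Glow: "G \<ge> (c - \<epsilon>) * (1 - s)"
  proof -
    have "(\<integral>x. indicator (UNIV - S) x * (c - \<epsilon>) \<partial>measure_pmf p) \<le> G"
      unfolding G_def
      by (intro integral_mono iC integrable_real_mult_indicator hint)
         (auto simp: indicator_def S_def h_def)
    then show ?thesis using pc by (simp add: mult.commute)
  qed
  have Gup: "G \<le> (c + \<epsilon>) * (1 - s)"
  proof -
    have "G \<le> (\<integral>x. indicator (UNIV - S) x * (c + \<epsilon>) \<partial>measure_pmf p)"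
      unfolding G_def
      by (intro integral_mono iC integrable_real_mult_indicator hint)
         (auto simp: indicator_def S_def h_def)
    then show ?thesis using pc by (simp add: mult.commute)
  qed
  have B0: "B \<ge> 0" unfolding B_def
    by (intro integral_nonneg_AE) (auto simp: AE_measure_pmf_iff h_def indicator_def info_nonneg[OF fin supp])
  have G2: "G \<le> (1 - s) * (L + 1)"
  proof -
    have "1 - s > 0" using smu assms by simp
    then have "G \<le> (1 - s) * log 2 (N / (1 - s))"
      using part_bound[OF fin supp, of "UNIV - S"] pc by (simp add: G_def h_def N_def)
    also have "log 2 (N / (1 - s)) = L + log 2 (1 / (1 - s))"
      using N1 \<open>1 - s > 0\<close> by (simp add: L_def log_divide)
    also have "log 2 (1 / (1 - s)) \<le> 1"
    proof -
      have "1 / (1 - s) \<le> 2" using smu assms \<open>1 - s > 0\<close> by (simp add: field_simps)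
      then have "log 2 (1 / (1 - s)) \<le> log 2 2" using \<open>1 - s > 0\<close> by (subst log_le_cancel_iff) auto
      then show ?thesis by simp
    qed
    finally show ?thesis using \<open>1 - s > 0\<close> by (simp add: mult_left_mono)
  qed
  have Bup: "B - s * L < 2 * \<mu> * a"
  proof (cases "s = 0")
    case True
    have "B = 0" unfolding B_def
    proof (intro integral_eq_zero_AE, unfold AE_measure_pmf_iff, intro ballI)
      fix x assume x: "x \<in> set_pmf p"
      show "h x * indicator S x = 0"
      proof (cases "x \<in> S")
        case True
        have "measure_pmf.prob p {x} \<le> s" unfolding s_def
          by (rule measure_pmf.finite_measure_mono) (use True in auto)
        then have "pmf p x \<le> 0" using \<open>s = 0\<close> by (simp add: measure_pmf_single)
        moreover have "pmf p x > 0" using x by (simp add: set_pmf_iff pmf_positive)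
        ultimately show ?thesis by simp
      qed simp
    qed
    then show ?thesis using True a1 assms(3) by simp
  next
    case False
    then have sp: "s > 0" using s0 by simp
    have "B \<le> s * log 2 (N / s)"
      using part_bound[OF fin supp, of S] sp by (simp add: B_def h_def N_def s_def)
    also have "log 2 (N / s) = L + log 2 (1/s)" using N1 sp by (simp add: L_def log_divide)
    finally have "B - s * L \<le> s * log 2 (1/s)" by (simp add: algebra_simps)
    also have "\<dots> < 2 * \<mu> * a" unfolding a_def by (rule xlog_bound) (use sp smu assms in auto)
    finally show ?thesis .
  qed
  have sL: "s * L \<le> \<mu> * L" using smu L0 by (simp add: mult_right_mono)
  have up: "cond_entropy p - c < \<epsilon> + \<mu> * (L + 2 * a)"
  proof -
    have "cond_entropy p - c \<le> (c + \<epsilon>) * (1 - s) + B - c" using H Gup by simp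
    moreover have "(c + \<epsilon>) * (1 - s) - c \<le> \<epsilon>" using s0 assms(5,6)
      by (simp add: algebra_simps)
    ultimately show ?thesis using Bup sL by (simp add: algebra_simps)
  qed
  have low: "c - cond_entropy p < \<epsilon> + \<mu> * (L + 2 * a)"
  proof -
    have s1: "1 - s > 0" using smu assms by simp
    have "c - cond_entropy p \<le> c - G" using H B0 by simp
    also have "c - G \<le> s * (L + 1) + \<epsilon>"
    proof -
      have "(c - \<epsilon>) * (1 - s) \<le> (1 - s) * (L + 1)" using Glow G2 by simp
      then have "c - \<epsilon> \<le> L + 1" using s1 by (simp add: mult.commute)
      then have "s * (c - \<epsilon>) \<le> s * (L + 1)" using s0 by (simp add: mult_left_mono)
      moreover have "c - G \<le> c - (c - \<epsilon>) * (1 - s)" using Glow by simp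
      ultimately show ?thesis by (simp add: algebra_simps)
    qed
    also have "\<dots> < \<epsilon> + \<mu> * (L + 2 * a)"
    proof -
      have "s < 2 * \<mu> * a" using smu a1 assms(3)
        by (smt (verit) mult_less_cancel_left2)
      then show ?thesis using sL by (simp add: algebra_simps)
    qed
    finally show ?thesis .
  qed
  have "\<bar>cond_entropy p - c\<bar> < \<epsilon> + \<mu> * (L + 2 * a)"
    using up low by (simp only: abs_less_iff minus_diff_eq)
  then show ?thesis by (simp only: logeq)
qed

end
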